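(* Let $s\ge 2$ and let $a,b\ge 1$ be integers with $a+b\le s$. Let $C$ be a set with $|C|\ge s+1$ and let $z_1,z_2$ be two distinct elements not in $C$. Let \[ \mathcal{C}=\{\{z_1\}\cup D: D\subseteq C,\ |D|=a\}\cup\{\{z_2\}\cup E: E\subseteq C,\ |E|=b\}. \] Then $\mathcal{C}$ is non-separable.
   Context: Two families $\mathcal{A}_1,\mathcal{A}_2$ are cross-intersecting if $A_1\cap A_2\neq\emptyset$ for all $A_1\in\mathcal{A}_1$, $A_2\in\mathcal{A}_2$. A family $\mathcal{A}$ is non-separable if for every partition $\mathcal{A}=\mathcal{A}_1\cup\mathcal{A}_2$ (disjoint union) with $(\mathcal{A}_1,\mathcal{A}_2)$ cross-intersecting, we have $\mathcal{A}_1=\emptyset$ or $\mathcal{A}_2=\emptyset$. *)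

theory Defs
  imports Main
begin

definition cross_intersecting :: "'a set set \<Rightarrow> 'a set set \<Rightarrow> bool" where
  "cross_intersecting A1 A2 \<longleftrightarrow> (\<forall>X\<in>A1. \<forall>Y\<in>A2. X \<inter> Y \<noteq> {})"

definition non_separable :: "'a set set \<Rightarrow> bool" where
  "non_separable A \<longleftrightarrow>
     (\<forall>A1 A2. A1 \<union> A2 = A \<and> A1 \<inter> A2 = {} \<and> cross_intersecting A1 A2
        \<longrightarrow> A1 = {} \<or> A2 = {})"

end

theory Submission
  imports Defs
begin

lemma chain_lemma:
  fixes C :: "'a set" and P Q :: "'a set \<Rightarrow> bool"
  assumes fin: "finite C" and cardC: "card C \<ge> a + b + 1"
    and H: "\<And>D E. D \<subseteq> C \<Longrightarrow> card D = a \<Longrightarrow> E \<subseteq> C \<Longrightarrow> card E = b \<Longrightarrow> D \<inter> E = {} \<Longrightarrow> (P D \<longleftrightarrow> Q E)"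
  shows "\<And>D D'. D \<subseteq> C \<Longrightarrow> card D = a \<Longrightarrow> D' \<subseteq> C \<Longrightarrow> card D' = a \<Longrightarrow> card (D - D') = k \<Longrightarrow> (P D \<longleftrightarrow> P D')"
proof (induction k)
  case 0
  have fD: "finite D" "finite D'" using 0 fin finite_subset by blast+
  have "D \<subseteq> D'" using 0 fD by auto
  then have "D = D'" using 0 fD by (metis card_subset_eq)
  then show ?case by simp
next
  case (Suc k)
  have fD: "finite D" "finite D'" using Suc fin finite_subset by blast+
  have "card (D - D') > 0" using Suc.prems(5) by simp
  then obtain x where "x \<in> D - D'" by (metis card_gt_0_iff ex_in_conv)
  then have x: "x \<in> D" "x \<notin> D'" by auto
  have "card (D - D') \<le> card (D' - D)" using card_le_sym_Diff[OF fD] Suc.prems by simp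
  then have "card (D' - D) > 0" using Suc.prems(5) by simp
  then obtain y where "y \<in> D' - D" by (metis card_gt_0_iff ex_in_conv)
  then have y: "y \<in> D'" "y \<notin> D" by auto
  have apos: "a > 0" using x fD Suc.prems(2) card_gt_0_iff by blast
  define D'' where "D'' = insert y (D - {x})"
  have D''C: "D'' \<subseteq> C" using Suc.prems x y D''_def by auto
  have cD'': "card D'' = a" using D''_def x y fD Suc.prems(2) apos
    by (simp add: card_Diff_singleton)
  have "D'' - D' = (D - D') - {x}" using D''_def y by auto
  then have cdiff: "card (D'' - D') = k" using Suc.prems(5) x fD by (simp add: card_Diff_singleton)
  have IH: "P D'' \<longleftrightarrow> P D'" using Suc.IH[OF D''C cD'' Suc.prems(3,4) cdiff] .
  have sub: "insert y D \<subseteq> C" using Suc.prems y by auto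
  have "card (C - insert y D) = card C - card (insert y D)"
    using card_Diff_subset[OF finite_subset[OF sub fin] sub] .
  also have "card (insert y D) = a + 1" using y fD Suc.prems(2) by simp
  finally have "card (C - insert y D) \<ge> b" using cardC by simp
  then obtain E where E: "E \<subseteq> C - insert y D" "card E = b"
    by (metis obtain_subset_with_card_n)
  have "P D \<longleftrightarrow> Q E" using H[OF Suc.prems(1,2)] E by auto
  moreover have "P D'' \<longleftrightarrow> Q E" using H[OF D''C cD''] E D''_def by auto
  ultimately show ?case using IH by simp
qed

lemma chain:
  fixes C :: "'a set" and P Q :: "'a set \<Rightarrow> bool"
  assumes fin: "finite C" and cardC: "card C \<ge> a + b + 1"
    and H: "\<And>D E. D \<subseteq> C \<Longrightarrow> card D = a \<Longrightarrow> E \<subseteq> C \<Longrightarrow> card E = b \<Longrightarrow> D \<inter> E = {} \<Longrightarrow> (P D \<longleftrightarrow> Q E)"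
    and "D \<subseteq> C" "card D = a" "D' \<subseteq> C" "card D' = a"
  shows "P D \<longleftrightarrow> P D'"
  by (rule chain_lemma[OF fin cardC H assms(4-7) refl])

theorem proposition3p2:
  fixes s a b :: nat and C :: "'a set" and z1 z2 :: 'a
  assumes "s \<ge> 2" and "a \<ge> 1" and "b \<ge> 1" and "a + b \<le> s"
    and "finite C" and "card C \<ge> s + 1"
    and "z1 \<noteq> z2" and "z1 \<notin> C" and "z2 \<notin> C"
  shows "non_separable
           ({insert z1 D | D. D \<subseteq> C \<and> card D = a} \<union>
            {insert z2 E | E. E \<subseteq> C \<and> card E = b})"
  unfolding non_separable_def
proof (intro allI impI)
  fix A1 A2
  let ?F = "{insert z1 D | D. D \<subseteq> C \<and> card D = a} \<union>
            {insert z2 E | E. E \<subseteq> C \<and> card E = b}"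
  assume h: "A1 \<union> A2 = ?F \<and> A1 \<inter> A2 = {} \<and> cross_intersecting A1 A2"
  have key: "S \<in> A1 \<longleftrightarrow> T \<in> A1" if "S \<in> ?F" "T \<in> ?F" "S \<inter> T = {}" for S T
  proof -
    have h1: "A1 \<union> A2 = ?F" and h3: "cross_intersecting A1 A2" using h by auto
    have ci: "X \<inter> Y \<noteq> {}" if "X \<in> A1" "Y \<in> A2" for X Y
      using h3 that unfolding cross_intersecting_def by blast
    have S12: "S \<in> A1 \<or> S \<in> A2" and T12: "T \<in> A1 \<or> T \<in> A2"
      using h1 that(1,2) by (metis Un_iff)+
    have n1: "\<not> (S \<in> A1 \<and> T \<in> A2)" using ci that(3) by blast
    have n2: "\<not> (T \<in> A1 \<and> S \<in> A2)" using ci that(3) by (metis Int_commute)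
    show ?thesis using S12 T12 n1 n2 by blast
  qed
  define P where "P D = (insert z1 D \<in> A1)" for D
  define Q where "Q E = (insert z2 E \<in> A1)" for E
  have cC: "card C \<ge> a + b + 1" "card C \<ge> b + a + 1" using assms by auto
  have HPQ: "P D \<longleftrightarrow> Q E" if "D \<subseteq> C" "card D = a" "E \<subseteq> C" "card E = b" "D \<inter> E = {}" for D E
    unfolding P_def Q_def
    by (rule key) (use that assms in auto)
  have chP: "P D \<longleftrightarrow> P D'" if "D \<subseteq> C" "card D = a" "D' \<subseteq> C" "card D' = a" for D D'
    using chain[OF assms(5) cC(1) HPQ that] .
  have chQ: "Q D \<longleftrightarrow> Q D'" if "D \<subseteq> C" "card D = b" "D' \<subseteq> C" "card D' = b" for D D'
  proof -
    have HQP: "Q E \<longleftrightarrow> P D" if "E \<subseteq> C" "card E = b" "D \<subseteq> C" "card D = a" "E \<inter> D = {}" for D E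
      using HPQ[OF that(3,4,1,2)] that(5) by (simp add: Int_commute)
    show ?thesis by (rule chain[OF assms(5) cC(2) HQP that])
  qed
  obtain S where S: "S \<subseteq> C" "card S = a + b" "finite S"
    using obtain_subset_with_card_n[of "a+b" C] cC by auto
  obtain D0 where D0: "D0 \<subseteq> S" "card D0 = a"
    using obtain_subset_with_card_n[of a S] S by auto
  define E0 where "E0 = S - D0"
  have E0: "E0 \<subseteq> C" "card E0 = b" "D0 \<inter> E0 = {}"
    using D0 S E0_def by (auto simp: card_Diff_subset finite_subset)
  have D0C: "D0 \<subseteq> C" using D0 S by auto
  have all: "X \<in> A1 \<longleftrightarrow> P D0" if "X \<in> ?F" for X
  proof -
    from that show ?thesis
    proof
      assume "X \<in> {insert z1 D | D. D \<subseteq> C \<and> card D = a}"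
      then obtain D where "X = insert z1 D" "D \<subseteq> C" "card D = a" by auto
      then show ?thesis using chP[OF _ _ D0C D0(2)] P_def by auto
    next
      assume "X \<in> {insert z2 E | E. E \<subseteq> C \<and> card E = b}"
      then obtain E where "X = insert z2 E" "E \<subseteq> C" "card E = b" by auto
      then show ?thesis using chQ[OF _ _ E0(1,2)] Q_def HPQ[OF D0C D0(2) E0] by auto
    qed
  qed
  show "A1 = {} \<or> A2 = {}"
  proof (cases "P D0")
    case True
    have "A2 = {}"
    proof (rule ccontr)
      assume "A2 \<noteq> {}"
      then obtain X where X: "X \<in> A2" by blast
      then have "X \<in> ?F" "X \<notin> A1" using h by blast+
      then show False using all True by blast
    qed
    then show ?thesis by simp
  next
    case False
    have "A1 = {}"
    proof (rule ccontr)
      assume "A1 \<noteq> {}"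
      then obtain X where X: "X \<in> A1" by blast
      then have "X \<in> ?F" using h by blast
      then show False using all False X by blast
    qed
    then show ?thesis by simp
  qed
qed

end
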